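(* Let $G$ be a finite group of $F$-class $1$ and $F$-rank $\ell$, and let $H$ be the largest solvable normal subgroup of $G$. Then: (a) $F(G)$ is a direct product of elementary abelian groups and $|F(G)| = \ell$; (b) $H$ is solvable of $F$-class $1$ and $F$-rank $\ell$, and $F(G) = F(H)$; (c) $C_H(F(H)) = F(H)$.
   Context: For a finite group $G$, $F(G)$ denotes its Fitting subgroup. The $F$-central series of $G$ is defined by $\nu_0(G)=F(G)$ and, for $i\ge 0$, $\nu_{i+1}(G)$ is the smallest normal subgroup $N$ of $F(G)$ with $N\le \nu_i(G)$ such that $\nu_i(G)/N$ is centralized by $F(G)$ and is a direct product of elementary abelian groups. The $F$-class of $G$ is the least integer $c\ge 0$ with $\nu_c(G)=\{1\}$; if the $F$-class is at least $1$, the $F$-rank of $G$ is $|\nu_0(G)/\nu_1(G)|$. *)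

theory Defs
  imports "HOL-Algebra.Algebra"
begin

fun lower_central :: "('a, 'b) monoid_scheme \<Rightarrow> nat \<Rightarrow> 'a set" where
  "lower_central K 0 = carrier K"
| "lower_central K (Suc n) =
     generate K {x \<otimes>\<^bsub>K\<^esub> y \<otimes>\<^bsub>K\<^esub> inv\<^bsub>K\<^esub> x \<otimes>\<^bsub>K\<^esub> inv\<^bsub>K\<^esub> y
                  | x y. x \<in> lower_central K n \<and> y \<in> carrier K}"

definition nilpotent_group :: "('a, 'b) monoid_scheme \<Rightarrow> bool" where
  "nilpotent_group K \<longleftrightarrow> group K \<and> (\<exists>n. lower_central K n = {\<one>\<^bsub>K\<^esub>})"

definition Fitting :: "('a, 'b) monoid_scheme \<Rightarrow> 'a set" where
  "Fitting G = generate G (\<Union>{N. N \<lhd> G \<and> nilpotent_group (G\<lparr>carrier := N\<rparr>)})"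

definition elementary_abelian :: "('a, 'b) monoid_scheme \<Rightarrow> bool" where
  "elementary_abelian E \<longleftrightarrow> comm_group E \<and>
     (\<exists>p::nat. Factorial_Ring.prime p \<and> (\<forall>x \<in> carrier E. x [^]\<^bsub>E\<^esub> p = \<one>\<^bsub>E\<^esub>))"

text \<open>The factors are taken with the same element type as Q, which loses nothing
  (each factor is isomorphic to a subgroup of Q).\<close>
definition dprod_elem_abelian :: "('x, 'y) monoid_scheme \<Rightarrow> bool" where
  "dprod_elem_abelian Q \<longleftrightarrow>
     (\<exists>(I::nat set) (E :: nat \<Rightarrow> 'x monoid). finite I \<and>
        (\<forall>i\<in>I. elementary_abelian (E i)) \<and> Q \<cong> product_group I E)"

definition F_step :: "('a, 'b) monoid_scheme \<Rightarrow> 'a set \<Rightarrow> 'a set" where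
  "F_step G V = \<Inter>{N. N \<subseteq> V \<and> N \<lhd> (G\<lparr>carrier := Fitting G\<rparr>) \<and>
      (\<forall>f \<in> Fitting G. \<forall>x \<in> V. f \<otimes>\<^bsub>G\<^esub> x \<otimes>\<^bsub>G\<^esub> inv\<^bsub>G\<^esub> f \<otimes>\<^bsub>G\<^esub> inv\<^bsub>G\<^esub> x \<in> N) \<and>
      dprod_elem_abelian ((G\<lparr>carrier := V\<rparr>) Mod N)}"

fun F_central :: "('a, 'b) monoid_scheme \<Rightarrow> nat \<Rightarrow> 'a set" where
  "F_central G 0 = Fitting G"
| "F_central G (Suc i) = F_step G (F_central G i)"

definition has_F_class :: "('a, 'b) monoid_scheme \<Rightarrow> nat \<Rightarrow> bool" where
  "has_F_class G c \<longleftrightarrow> F_central G c = {\<one>\<^bsub>G\<^esub>} \<and> (\<forall>j<c. F_central G j \<noteq> {\<one>\<^bsub>G\<^esub>})"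

definition F_rank :: "('a, 'b) monoid_scheme \<Rightarrow> nat" where
  "F_rank G = order ((G\<lparr>carrier := F_central G 0\<rparr>) Mod (F_central G 1))"

end

theory Submission
  imports Defs
begin


definition cset :: "('a, 'b) monoid_scheme \<Rightarrow> 'a set \<Rightarrow> 'a set \<Rightarrow> 'a set" where
  "cset M A B = {a \<otimes>\<^bsub>M\<^esub> b \<otimes>\<^bsub>M\<^esub> inv\<^bsub>M\<^esub> a \<otimes>\<^bsub>M\<^esub> inv\<^bsub>M\<^esub> b | a b. a \<in> A \<and> b \<in> B}"

definition commg :: "('a, 'b) monoid_scheme \<Rightarrow> 'a set \<Rightarrow> 'a set \<Rightarrow> 'a set" where
  "commg M A B = generate M (cset M A B)"

fun LC :: "('a, 'b) monoid_scheme \<Rightarrow> 'a set \<Rightarrow> nat \<Rightarrow> 'a set" where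
  "LC M K 0 = K"
| "LC M K (Suc n) = commg M (LC M K n) K"

definition nsub :: "('a, 'b) monoid_scheme \<Rightarrow> 'a set \<Rightarrow> 'a set \<Rightarrow> bool" where
  "nsub M H N \<longleftrightarrow> subgroup N M \<and> N \<subseteq> H \<and> (\<forall>h\<in>H. \<forall>n\<in>N. h \<otimes>\<^bsub>M\<^esub> n \<otimes>\<^bsub>M\<^esub> inv\<^bsub>M\<^esub> h \<in> N)"

context group begin

lemma subgroup_of_sub:
  assumes "subgroup H G" "subgroup N (G\<lparr>carrier := H\<rparr>)"
  shows "subgroup N G"
proof -
  have NH: "N \<subseteq> H" using subgroup.subset[OF assms(2)] by simp
  show ?thesis
  proof (rule subgroupI)
    show "N \<subseteq> carrier G" using NH subgroup.subset[OF assms(1)] by auto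
    show "N \<noteq> {}" using subgroup.one_closed[OF assms(2)] by auto
    fix a b assume a: "a \<in> N" and b: "b \<in> N"
    show "inv a \<in> N" using subgroup.m_inv_closed[OF assms(2) a] m_inv_consistent[OF assms(1)] a NH by auto
    show "a \<otimes> b \<in> N" using subgroup.m_closed[OF assms(2) a b] by simp
  qed
qed

lemma nsub_iff:
  assumes "subgroup H G"
  shows "(N \<lhd> G\<lparr>carrier := H\<rparr>) \<longleftrightarrow> nsub G H N"
proof -
  interpret GH: group "G\<lparr>carrier := H\<rparr>" using subgroup.subgroup_is_group[OF assms is_group] .
  show ?thesis
  proof
    assume N: "N \<lhd> G\<lparr>carrier := H\<rparr>"
    hence sN: "subgroup N (G\<lparr>carrier := H\<rparr>)" by (rule normal_imp_subgroup)
    have NH: "N \<subseteq> H" using subgroup.subset[OF sN] by simp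
    have "\<forall>h\<in>H. \<forall>n\<in>N. h \<otimes> n \<otimes> inv h \<in> N"
      using N unfolding GH.normal_inv_iff using m_inv_consistent[OF assms] by auto
    thus "nsub G H N" unfolding nsub_def using subgroup_of_sub[OF assms sN] NH by auto
  next
    assume "nsub G H N"
    hence s: "subgroup N G" and NH: "N \<subseteq> H" and c: "\<forall>h\<in>H. \<forall>n\<in>N. h \<otimes> n \<otimes> inv h \<in> N"
      unfolding nsub_def by auto
    have "subgroup N (G\<lparr>carrier := H\<rparr>)" by (rule subgroup_incl[OF s assms NH])
    thus "N \<lhd> G\<lparr>carrier := H\<rparr>" unfolding GH.normal_inv_iff
      using c m_inv_consistent[OF assms] by auto
  qed
qed

lemma nsub_normal_iff: "(N \<lhd> G) \<longleftrightarrow> nsub G (carrier G) N"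
  using nsub_iff[OF subgroup_self] by simp

lemma nsub_subgroup: "nsub G H N \<Longrightarrow> subgroup N G" unfolding nsub_def by auto
lemma nsub_sub: "nsub G H N \<Longrightarrow> N \<subseteq> H" unfolding nsub_def by auto
lemma nsub_conj: "nsub G H N \<Longrightarrow> h \<in> H \<Longrightarrow> n \<in> N \<Longrightarrow> h \<otimes> n \<otimes> inv h \<in> N" unfolding nsub_def by auto

lemma gen_nsub:
  assumes H: "subgroup H G" and S: "S \<subseteq> H" and c: "\<And>h s. h \<in> H \<Longrightarrow> s \<in> S \<Longrightarrow> h \<otimes> s \<otimes> inv h \<in> S"
  shows "nsub G H (generate G S)"
proof -
  interpret GH: group "G\<lparr>carrier := H\<rparr>" using subgroup.subgroup_is_group[OF H is_group] .
  have "generate (G\<lparr>carrier := H\<rparr>) S \<lhd> G\<lparr>carrier := H\<rparr>"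
    apply (rule GH.normal_generateI) using S c m_inv_consistent[OF H] S by auto
  thus ?thesis using nsub_iff[OF H] generate_consistent[OF S H] by simp
qed

lemma comm_in_carrier: "x \<in> carrier G \<Longrightarrow> y \<in> carrier G \<Longrightarrow> x \<otimes> y \<otimes> inv x \<otimes> inv y \<in> carrier G"
  by simp

lemma cancel1 [simp]: "x \<in> carrier G \<Longrightarrow> y \<in> carrier G \<Longrightarrow> x \<otimes> (inv x \<otimes> y) = y"
  by (simp add: m_assoc[symmetric])
lemma cancel2 [simp]: "x \<in> carrier G \<Longrightarrow> y \<in> carrier G \<Longrightarrow> inv x \<otimes> (x \<otimes> y) = y"
  by (simp add: m_assoc[symmetric])

lemma conj_comm:
  assumes "h \<in> carrier G" "x \<in> carrier G" "y \<in> carrier G"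
  shows "h \<otimes> (x \<otimes> y \<otimes> inv x \<otimes> inv y) \<otimes> inv h
   = (h \<otimes> x \<otimes> inv h) \<otimes> (h \<otimes> y \<otimes> inv h) \<otimes> inv (h \<otimes> x \<otimes> inv h) \<otimes> inv (h \<otimes> y \<otimes> inv h)"
  using assms by (simp add: m_assoc inv_mult_group)

end

context group begin

lemma cset_carrier: "A \<subseteq> carrier G \<Longrightarrow> B \<subseteq> carrier G \<Longrightarrow> cset G A B \<subseteq> carrier G"
  unfolding cset_def using comm_in_carrier by blast

lemma commg_subgroup: "A \<subseteq> carrier G \<Longrightarrow> B \<subseteq> carrier G \<Longrightarrow> subgroup (commg G A B) G"
  unfolding commg_def by (rule generate_is_subgroup[OF cset_carrier])

lemma cset_mono: "A \<subseteq> A' \<Longrightarrow> B \<subseteq> B' \<Longrightarrow> cset G A B \<subseteq> cset G A' B'"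
  unfolding cset_def by blast

lemma commg_mono: "A \<subseteq> A' \<Longrightarrow> B \<subseteq> B' \<Longrightarrow> commg G A B \<subseteq> commg G A' B'"
  unfolding commg_def by (rule mono_generate[OF cset_mono])

lemma comm_in_commg: "a \<in> A \<Longrightarrow> b \<in> B \<Longrightarrow> a \<otimes> b \<otimes> inv a \<otimes> inv b \<in> commg G A B"
  unfolding commg_def cset_def by (rule generate.incl) blast

lemma commg_nsub:
  assumes H: "subgroup H G" and A: "nsub G H A" and B: "nsub G H B"
  shows "nsub G H (commg G A B)"
  unfolding commg_def
proof (rule gen_nsub[OF H])
  have AH: "A \<subseteq> H" "B \<subseteq> H" using A B nsub_sub by auto
  have Hc: "H \<subseteq> carrier G" using subgroup.subset[OF H] .
  show "cset G A B \<subseteq> H"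
  proof
    fix s assume "s \<in> cset G A B"
    then obtain a b where ab: "a \<in> A" "b \<in> B" "s = a \<otimes> b \<otimes> inv a \<otimes> inv b" unfolding cset_def by blast
    have "a \<in> H" "b \<in> H" using ab AH by blast+
    thus "s \<in> H" using ab(3) subgroup.m_closed[OF H] subgroup.m_inv_closed[OF H] by simp
  qed
  fix h s assume h: "h \<in> H" and s: "s \<in> cset G A B"
  then obtain a b where ab: "a \<in> A" "b \<in> B" "s = a \<otimes> b \<otimes> inv a \<otimes> inv b" unfolding cset_def by blast
  have c: "h \<in> carrier G" "a \<in> carrier G" "b \<in> carrier G" using h ab AH Hc by auto
  have "h \<otimes> s \<otimes> inv h = (h \<otimes> a \<otimes> inv h) \<otimes> (h \<otimes> b \<otimes> inv h) \<otimes> inv (h \<otimes> a \<otimes> inv h) \<otimes> inv (h \<otimes> b \<otimes> inv h)"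
    using conj_comm[OF c] ab by simp
  moreover have "h \<otimes> a \<otimes> inv h \<in> A" "h \<otimes> b \<otimes> inv h \<in> B" using nsub_conj A B h ab by auto
  ultimately show "h \<otimes> s \<otimes> inv h \<in> cset G A B" unfolding cset_def by blast
qed

lemma commg_le_left:
  assumes H: "subgroup H G" and A: "nsub G H A" and B: "B \<subseteq> H"
  shows "commg G A B \<subseteq> A"
  unfolding commg_def
proof (rule generate_subgroup_incl[OF _ nsub_subgroup[OF A]])
  have Hc: "H \<subseteq> carrier G" using subgroup.subset[OF H] .
  show "cset G A B \<subseteq> A"
  proof
    fix s assume "s \<in> cset G A B"
    then obtain a b where ab: "a \<in> A" "b \<in> B" "s = a \<otimes> b \<otimes> inv a \<otimes> inv b" unfolding cset_def by blast
    have aH: "a \<in> H" using ab A nsub_sub by blast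
    have c: "a \<in> carrier G" "b \<in> carrier G" using aH ab B Hc by blast+
    have "b \<otimes> inv a \<otimes> inv b \<in> A" using nsub_conj[OF A, of b "inv a"] ab B
        subgroup.m_inv_closed[OF nsub_subgroup[OF A]] by auto
    moreover have "s = a \<otimes> (b \<otimes> inv a \<otimes> inv b)" using ab c by (simp add: m_assoc)
    ultimately show "s \<in> A" using subgroup.m_closed[OF nsub_subgroup[OF A]] ab by auto
  qed
qed

lemma commg_le_right:
  assumes H: "subgroup H G" and A: "A \<subseteq> H" and B: "nsub G H B"
  shows "commg G A B \<subseteq> B"
  unfolding commg_def
proof (rule generate_subgroup_incl[OF _ nsub_subgroup[OF B]])
  have Hc: "H \<subseteq> carrier G" using subgroup.subset[OF H] .
  show "cset G A B \<subseteq> B"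
  proof
    fix s assume "s \<in> cset G A B"
    then obtain a b where ab: "a \<in> A" "b \<in> B" "s = a \<otimes> b \<otimes> inv a \<otimes> inv b" unfolding cset_def by blast
    have bH: "b \<in> H" using ab B nsub_sub by blast
    have c: "a \<in> carrier G" "b \<in> carrier G" using bH ab A Hc by blast+
    have "a \<otimes> b \<otimes> inv a \<in> B" using nsub_conj[OF B, of a b] ab A by blast
    moreover have "inv b \<in> B" using subgroup.m_inv_closed[OF nsub_subgroup[OF B]] ab by auto
    ultimately show "s \<in> B" using subgroup.m_closed[OF nsub_subgroup[OF B]] ab by auto
  qed
qed

lemma commg_trivial:
  assumes "cset G A B \<subseteq> {\<one>}" shows "commg G A B = {\<one>}"
  using mono_generate[OF assms] generate_one generate.one[of G] unfolding commg_def by auto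

lemma nsub_one: "subgroup H G \<Longrightarrow> nsub G H {\<one>}"
  unfolding nsub_def using triv_subgroup subgroup.one_closed by (auto simp: subgroup.mem_carrier)

lemma nsub_self: "subgroup H G \<Longrightarrow> nsub G H H"
  unfolding nsub_def by (auto simp: subgroup.m_closed subgroup.m_inv_closed)

lemma LC_nsub: "subgroup H G \<Longrightarrow> nsub G H K \<Longrightarrow> nsub G H (LC G K n)"
  by (induction n) (auto intro: commg_nsub)

lemma LC_Suc_sub: "subgroup H G \<Longrightarrow> nsub G H K \<Longrightarrow> LC G K (Suc n) \<subseteq> LC G K n"
  using commg_le_left[OF _ LC_nsub] nsub_sub by auto

lemma LC_antimono: "subgroup H G \<Longrightarrow> nsub G H K \<Longrightarrow> m \<le> n \<Longrightarrow> LC G K n \<subseteq> LC G K m"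
proof (induction n)
  case 0 thus ?case by simp
next
  case (Suc n) thus ?case using LC_Suc_sub[of H K n] by (cases "m = Suc n") auto
qed

lemma LC_one: "subgroup H G \<Longrightarrow> nsub G H K \<Longrightarrow> LC G K m = {\<one>} \<Longrightarrow> m \<le> n \<Longrightarrow> LC G K n = {\<one>}"
  using LC_antimono[of H K m n] subgroup.one_closed[OF nsub_subgroup[OF LC_nsub]] by blast

lemma lc_eq:
  assumes K: "subgroup K G"
  shows "lower_central (G\<lparr>carrier := K\<rparr>) n = LC G K n"
proof (induction n)
  case 0 thus ?case by simp
next
  case (Suc n)
  have sub: "LC G K n \<subseteq> K" using LC_nsub[OF K nsub_self[OF K]] nsub_sub by blast
  have Kc: "K \<subseteq> carrier G" using subgroup.subset[OF K] .
  have ic: "\<And>x. x \<in> K \<Longrightarrow> inv\<^bsub>G\<lparr>carrier := K\<rparr>\<^esub> x = inv x" using m_inv_consistent[OF K] by blast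
  have eq: "{x \<otimes>\<^bsub>G\<lparr>carrier := K\<rparr>\<^esub> y \<otimes>\<^bsub>G\<lparr>carrier := K\<rparr>\<^esub> inv\<^bsub>G\<lparr>carrier := K\<rparr>\<^esub> x \<otimes>\<^bsub>G\<lparr>carrier := K\<rparr>\<^esub> inv\<^bsub>G\<lparr>carrier := K\<rparr>\<^esub> y
          | x y. x \<in> LC G K n \<and> y \<in> K} = cset G (LC G K n) K" (is "?L = _")
  proof (intro equalityI subsetI)
    fix s assume "s \<in> ?L"
    then obtain x y where xy: "x \<in> LC G K n" "y \<in> K" "s = x \<otimes> y \<otimes> inv\<^bsub>G\<lparr>carrier := K\<rparr>\<^esub> x \<otimes> inv\<^bsub>G\<lparr>carrier := K\<rparr>\<^esub> y" by auto
    have "s = x \<otimes> y \<otimes> inv x \<otimes> inv y" using xy ic sub by auto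
    thus "s \<in> cset G (LC G K n) K" unfolding cset_def using xy by blast
  next
    fix s assume "s \<in> cset G (LC G K n) K"
    then obtain x y where xy: "x \<in> LC G K n" "y \<in> K" "s = x \<otimes> y \<otimes> inv x \<otimes> inv y" unfolding cset_def by auto
    have "s = x \<otimes> y \<otimes> inv\<^bsub>G\<lparr>carrier := K\<rparr>\<^esub> x \<otimes> inv\<^bsub>G\<lparr>carrier := K\<rparr>\<^esub> y" using xy ic sub by auto
    thus "s \<in> ?L" using xy by auto
  qed
  have csub: "cset G (LC G K n) K \<subseteq> K" unfolding cset_def using sub K
    by (auto intro!: subgroup.m_closed[OF K] subgroup.m_inv_closed[OF K])
  show ?case using Suc eq generate_consistent[OF csub K] by (simp add: commg_def)
qed

lemma nilpotent_iff:
  assumes K: "subgroup K G"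
  shows "nilpotent_group (G\<lparr>carrier := K\<rparr>) \<longleftrightarrow> (\<exists>n. LC G K n = {\<one>})"
  unfolding nilpotent_group_def lc_eq[OF K] using subgroup.subgroup_is_group[OF K is_group] by simp

end


definition selAB :: "'a set \<Rightarrow> 'a set \<Rightarrow> bool \<Rightarrow> 'a set" where
  "selAB A B c = (if c then A else B)"

definition Cw :: "('a, 'b) monoid_scheme \<Rightarrow> 'a set \<Rightarrow> 'a set \<Rightarrow> bool \<Rightarrow> bool list \<Rightarrow> 'a set" where
  "Cw M A B c cs = foldl (\<lambda>S d. commg M S (selAB A B d)) (selAB A B c) cs"

definition TW :: "('a, 'b) monoid_scheme \<Rightarrow> 'a set \<Rightarrow> 'a set \<Rightarrow> nat \<Rightarrow> 'a set" where
  "TW M A B n = generate M (\<Union>{Cw M A B c cs | c cs. length cs = n})"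

lemma Cw_snoc: "Cw M A B c (cs @ [d]) = commg M (Cw M A B c cs) (selAB A B d)"
  unfolding Cw_def by simp

lemma count_TF: "count_list ys True + count_list ys False = length ys"
  by (induction ys) auto

context group begin

lemma setmultI: "a \<in> A \<Longrightarrow> b \<in> B \<Longrightarrow> x = a \<otimes> b \<Longrightarrow> x \<in> A <#> B"
  unfolding set_mult_def by auto
lemma setmultE: "x \<in> A <#> B \<Longrightarrow> (\<And>a b. a \<in> A \<Longrightarrow> b \<in> B \<Longrightarrow> x = a \<otimes> b \<Longrightarrow> P) \<Longrightarrow> P"
  unfolding set_mult_def by auto

lemma prod_nsub:
  assumes H: "subgroup H G" and A: "nsub G H A" and B: "nsub G H B"
  shows "nsub G H (A <#> B)"
proof -
  have Hc: "H \<subseteq> carrier G" using subgroup.subset[OF H] .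
  have AH: "A \<subseteq> H" and BH: "B \<subseteq> H" using A B nsub_sub by blast+
  have Ac: "A \<subseteq> carrier G" and Bc: "B \<subseteq> carrier G" using AH BH Hc by blast+
  note sA = nsub_subgroup[OF A] and sB = nsub_subgroup[OF B]
  have sub: "A <#> B \<subseteq> H"
  proof
    fix x assume "x \<in> A <#> B"
    then obtain a b where "a \<in> A" "b \<in> B" "x = a \<otimes> b" by (rule setmultE)
    thus "x \<in> H" using AH BH subgroup.m_closed[OF H] by blast
  qed
  have sg: "subgroup (A <#> B) G"
  proof (rule subgroupI)
    show "A <#> B \<subseteq> carrier G" using sub Hc by blast
    have "\<one> \<otimes> \<one> \<in> A <#> B" by (rule setmultI[OF subgroup.one_closed[OF sA] subgroup.one_closed[OF sB] refl])
    thus "A <#> B \<noteq> {}" by blast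
  next
    fix x assume "x \<in> A <#> B"
    then obtain a b where ab: "a \<in> A" "b \<in> B" "x = a \<otimes> b" by (rule setmultE)
    have c: "a \<in> carrier G" "b \<in> carrier G" using ab Ac Bc by blast+
    have "inv b \<otimes> inv a \<otimes> inv (inv b) \<in> A"
      using nsub_conj[OF A, of "inv b" "inv a"] subgroup.m_inv_closed[OF sA ab(1)] subgroup.m_inv_closed[OF sB ab(2)] BH
      by blast
    moreover have "inv b \<in> B" using subgroup.m_inv_closed[OF sB ab(2)] .
    moreover have "inv x = (inv b \<otimes> inv a \<otimes> inv (inv b)) \<otimes> inv b"
      using c ab(3) by (simp add: m_assoc inv_mult_group)
    ultimately show "inv x \<in> A <#> B" by (rule setmultI)
  next
    fix x y assume x: "x \<in> A <#> B" and y: "y \<in> A <#> B"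
    obtain a b where ab1: "a \<in> A" "b \<in> B" "x = a \<otimes> b" using x by (rule setmultE)
    obtain a' b' where ab2: "a' \<in> A" "b' \<in> B" "y = a' \<otimes> b'" using y by (rule setmultE)
    note ab = ab1 ab2
    have c: "a \<in> carrier G" "b \<in> carrier G" "a' \<in> carrier G" "b' \<in> carrier G" using ab Ac Bc by blast+
    have "b \<otimes> a' \<otimes> inv b \<in> A" using nsub_conj[OF A] ab BH by blast
    hence "a \<otimes> (b \<otimes> a' \<otimes> inv b) \<in> A" using subgroup.m_closed[OF sA] ab by blast
    moreover have "b \<otimes> b' \<in> B" using subgroup.m_closed[OF sB] ab by blast
    moreover have "x \<otimes> y = (a \<otimes> (b \<otimes> a' \<otimes> inv b)) \<otimes> (b \<otimes> b')"
      using c ab by (simp add: m_assoc)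
    ultimately show "x \<otimes> y \<in> A <#> B" by (rule setmultI)
  qed
  have "\<forall>h\<in>H. \<forall>x\<in>A <#> B. h \<otimes> x \<otimes> inv h \<in> A <#> B"
  proof (intro ballI)
    fix h x assume h: "h \<in> H" and x: "x \<in> A <#> B"
    from x obtain a b where ab: "a \<in> A" "b \<in> B" "x = a \<otimes> b" by (rule setmultE)
    have c: "a \<in> carrier G" "b \<in> carrier G" "h \<in> carrier G" using ab Ac Bc h Hc by blast+
    have "h \<otimes> x \<otimes> inv h = (h \<otimes> a \<otimes> inv h) \<otimes> (h \<otimes> b \<otimes> inv h)" using c ab by (simp add: m_assoc)
    moreover have "h \<otimes> a \<otimes> inv h \<in> A" "h \<otimes> b \<otimes> inv h \<in> B" using nsub_conj A B h ab by blast+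
    ultimately show "h \<otimes> x \<otimes> inv h \<in> A <#> B" by (intro setmultI)
  qed
  thus ?thesis unfolding nsub_def using sg sub by blast
qed

lemma foldl_nsub:
  assumes H: "subgroup H G" and A: "nsub G H A" and B: "nsub G H B"
  shows "nsub G H S \<Longrightarrow> nsub G H (foldl (\<lambda>S d. commg G S (selAB A B d)) S cs)"
proof (induction cs arbitrary: S)
  case Nil thus ?case by simp
next
  case (Cons d cs)
  have "nsub G H (selAB A B d)" using A B unfolding selAB_def by simp
  hence "nsub G H (commg G S (selAB A B d))" using commg_nsub[OF H Cons.prems] by blast
  thus ?case using Cons.IH by simp
qed

lemma Cw_nsub:
  assumes H: "subgroup H G" and A: "nsub G H A" and B: "nsub G H B"
  shows "nsub G H (Cw G A B c cs)"
  unfolding Cw_def by (rule foldl_nsub[OF H A B]) (use A B in \<open>simp add: selAB_def\<close>)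

lemma TW_nsub:
  assumes H: "subgroup H G" and A: "nsub G H A" and B: "nsub G H B"
  shows "nsub G H (TW G A B n)"
  unfolding TW_def
proof (rule gen_nsub[OF H])
  show "\<Union>{Cw G A B c cs | c cs. length cs = n} \<subseteq> H" using Cw_nsub[OF H A B] nsub_sub by blast
  fix h s assume h: "h \<in> H" and "s \<in> \<Union>{Cw G A B c cs | c cs. length cs = n}"
  then obtain c cs where "length cs = n" "s \<in> Cw G A B c cs" by blast
  thus "h \<otimes> s \<otimes> inv h \<in> \<Union>{Cw G A B c cs | c cs. length cs = n}"
    using nsub_conj[OF Cw_nsub[OF H A B] h] by blast
qed

lemma id_comm_prod:
  assumes "u \<in> carrier G" "a \<in> carrier G" "b \<in> carrier G"
  shows "u \<otimes> (a \<otimes> b) \<otimes> inv u \<otimes> inv (a \<otimes> b) =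
     (u \<otimes> a \<otimes> inv u \<otimes> inv a) \<otimes> (a \<otimes> (u \<otimes> b \<otimes> inv u \<otimes> inv b) \<otimes> inv a)"
  using assms by (simp add: m_assoc inv_mult_group)

lemma id_comm_inv:
  assumes "u \<in> carrier G" "v \<in> carrier G"
  shows "inv u \<otimes> v \<otimes> inv (inv u) \<otimes> inv v = inv u \<otimes> inv (u \<otimes> v \<otimes> inv u \<otimes> inv v) \<otimes> inv (inv u)"
  using assms by (simp add: m_assoc inv_mult_group)

lemma id_comm_mult:
  assumes "u \<in> carrier G" "w \<in> carrier G" "v \<in> carrier G"
  shows "(u \<otimes> w) \<otimes> v \<otimes> inv (u \<otimes> w) \<otimes> inv v = (u \<otimes> (w \<otimes> v \<otimes> inv w \<otimes> inv v) \<otimes> inv u) \<otimes> (u \<otimes> v \<otimes> inv u \<otimes> inv v)"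
  using assms by (simp add: m_assoc inv_mult_group)

end

context group begin

lemma TW_step:
  assumes H: "subgroup H G" and A: "nsub G H A" and B: "nsub G H B"
  shows "LC G (A <#> B) n \<subseteq> TW G A B n"
proof (induction n)
  case 0
  show ?case
  proof
    fix x assume "x \<in> LC G (A <#> B) 0"
    then obtain a b where ab: "a \<in> A" "b \<in> B" "x = a \<otimes> b" by (auto elim: setmultE)
    have "a \<in> TW G A B 0" unfolding TW_def
      by (rule generate.incl) (use ab in \<open>auto simp: Cw_def selAB_def intro!: exI[of _ True] exI[of _ "[]"]\<close>)
    moreover have "b \<in> TW G A B 0" unfolding TW_def
      by (rule generate.incl) (use ab in \<open>auto simp: Cw_def selAB_def intro!: exI[of _ False] exI[of _ "[]"]\<close>)
    ultimately show "x \<in> TW G A B 0" using ab(3) unfolding TW_def by (simp add: generate.eng)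
  qed
next
  case (Suc n)
  have Hc: "H \<subseteq> carrier G" using subgroup.subset[OF H] .
  note T1 = TW_nsub[OF H A B, of "Suc n"] and T0 = TW_nsub[OF H A B, of n]
  note sT1 = nsub_subgroup[OF T1]
  have ABn: "nsub G H (A <#> B)" by (rule prod_nsub[OF H A B])
  have Ac: "A \<subseteq> carrier G" "B \<subseteq> carrier G" using A B nsub_sub Hc by blast+
  have gen: "u \<otimes> a \<otimes> inv u \<otimes> inv a \<in> TW G A B (Suc n)"
    if u: "u \<in> Cw G A B c cs" "length cs = n" and a: "a \<in> selAB A B d" for u c cs a d
  proof -
    have "u \<otimes> a \<otimes> inv u \<otimes> inv a \<in> Cw G A B c (cs @ [d])"
      unfolding Cw_snoc by (rule comm_in_commg[OF u(1) a])
    thus ?thesis unfolding TW_def using u(2) by (intro generate.incl) (auto intro!: exI[of _ c] exI[of _ "cs @ [d]"])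
  qed
  have genAB: "u \<otimes> v \<otimes> inv u \<otimes> inv v \<in> TW G A B (Suc n)"
    if u: "u \<in> Cw G A B c cs" "length cs = n" and v: "v \<in> A <#> B" for u c cs v
  proof -
    from v obtain a b where ab: "a \<in> A" "b \<in> B" "v = a \<otimes> b" by (rule setmultE)
    have uH: "u \<in> H" using u Cw_nsub[OF H A B] nsub_sub by blast
    have c: "u \<in> carrier G" "a \<in> carrier G" "b \<in> carrier G" using uH Hc ab Ac by blast+
    have 1: "u \<otimes> a \<otimes> inv u \<otimes> inv a \<in> TW G A B (Suc n)"
      using gen[OF u, of a True] ab by (simp add: selAB_def)
    have 2: "u \<otimes> b \<otimes> inv u \<otimes> inv b \<in> TW G A B (Suc n)"
      using gen[OF u, of b False] ab by (simp add: selAB_def)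
    have aH: "a \<in> H" using ab A nsub_sub by blast
    have 3: "a \<otimes> (u \<otimes> b \<otimes> inv u \<otimes> inv b) \<otimes> inv a \<in> TW G A B (Suc n)"
      using nsub_conj[OF T1 aH 2] .
    show ?thesis using id_comm_prod[OF c] ab(3) subgroup.m_closed[OF sT1 1 3] by simp
  qed
  have main: "\<And>v. v \<in> A <#> B \<Longrightarrow> u \<otimes> v \<otimes> inv u \<otimes> inv v \<in> TW G A B (Suc n)"
    if "u \<in> TW G A B n" for u
    using that unfolding TW_def[of G A B n]
  proof (induction u rule: generate.induct)
    case one
    have "v \<in> carrier G" using one ABn nsub_sub Hc by blast
    thus ?case using subgroup.one_closed[OF sT1] by simp
  next
    case (incl u)
    then obtain c cs where "u \<in> Cw G A B c cs" "length cs = n" by blast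
    thus ?case using genAB incl by blast
  next
    case (inv u)
    then obtain c cs where u: "u \<in> Cw G A B c cs" "length cs = n" by blast
    have uH: "u \<in> H" using u Cw_nsub[OF H A B] nsub_sub by blast
    have vH: "v \<in> H" using inv ABn nsub_sub by blast
    have c: "u \<in> carrier G" "v \<in> carrier G" using uH vH Hc by blast+
    have "u \<otimes> v \<otimes> inv u \<otimes> inv v \<in> TW G A B (Suc n)" using genAB u inv by blast
    hence "inv (u \<otimes> v \<otimes> inv u \<otimes> inv v) \<in> TW G A B (Suc n)" using subgroup.m_inv_closed[OF sT1] by blast
    hence "inv u \<otimes> inv (u \<otimes> v \<otimes> inv u \<otimes> inv v) \<otimes> inv (inv u) \<in> TW G A B (Suc n)"
      using nsub_conj[OF T1] subgroup.m_inv_closed[OF H uH] by blast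
    thus ?case using id_comm_inv[OF c] by simp
  next
    case (eng u w)
    have gu: "u \<in> TW G A B n" "w \<in> TW G A B n" using eng.hyps unfolding TW_def by blast+
    have uH: "u \<in> H" and wH: "w \<in> H" using gu T0 nsub_sub by blast+
    have vH: "v \<in> H" using eng ABn nsub_sub by blast
    have c: "u \<in> carrier G" "w \<in> carrier G" "v \<in> carrier G" using uH vH wH Hc by blast+
    have 1: "w \<otimes> v \<otimes> inv w \<otimes> inv v \<in> TW G A B (Suc n)" using eng by blast
    have 2: "u \<otimes> v \<otimes> inv u \<otimes> inv v \<in> TW G A B (Suc n)" using eng by blast
    have 3: "u \<otimes> (w \<otimes> v \<otimes> inv w \<otimes> inv v) \<otimes> inv u \<in> TW G A B (Suc n)" using nsub_conj[OF T1 uH 1] .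
    show ?case using id_comm_mult[OF c] subgroup.m_closed[OF sT1 3 2] by simp
  qed
  show ?case
  proof -
    have "cset G (LC G (A <#> B) n) (A <#> B) \<subseteq> TW G A B (Suc n)"
    proof
      fix s assume "s \<in> cset G (LC G (A <#> B) n) (A <#> B)"
      then obtain u v where uv: "u \<in> LC G (A <#> B) n" "v \<in> A <#> B" "s = u \<otimes> v \<otimes> inv u \<otimes> inv v"
        unfolding cset_def by blast
      have "u \<in> TW G A B n" using uv Suc by blast
      thus "s \<in> TW G A B (Suc n)" using main uv by blast
    qed
    thus ?thesis unfolding LC.simps commg_def by (rule generate_subgroup_incl[OF _ sT1])
  qed
qed

lemma Cw_count:
  assumes H: "subgroup H G" and A: "nsub G H A" and B: "nsub G H B"
  shows "b0 \<in> set (c # cs) \<Longrightarrow> Cw G A B c cs \<subseteq> LC G (selAB A B b0) (count_list (c # cs) b0 - 1)"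
proof (induction cs rule: rev_induct)
  case Nil
  hence "c = b0" by simp
  thus ?case by (simp add: Cw_def)
next
  case (snoc d cs)
  have X: "nsub G H (selAB A B b0)" "nsub G H (selAB A B d)" using A B by (simp_all add: selAB_def)
  have Cn: "nsub G H (Cw G A B c cs)" by (rule Cw_nsub[OF H A B])
  show ?case
  proof (cases "d = b0")
    case True
    show ?thesis
    proof (cases "b0 \<in> set (c # cs)")
      case True
      hence IH: "Cw G A B c cs \<subseteq> LC G (selAB A B b0) (count_list (c # cs) b0 - 1)" using snoc by blast
      have pos: "count_list (c # cs) b0 \<ge> 1" using True count_list_0_iff[of "c # cs" b0] by linarith
      have "Cw G A B c (cs @ [d]) \<subseteq> commg G (LC G (selAB A B b0) (count_list (c # cs) b0 - 1)) (selAB A B b0)"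
        unfolding Cw_snoc using \<open>d = b0\<close> commg_mono[OF IH] by blast
      also have "\<dots> = LC G (selAB A B b0) (Suc (count_list (c # cs) b0 - 1))" by simp
      also have "Suc (count_list (c # cs) b0 - 1) = count_list (c # cs @ [d]) b0 - 1"
        using pos \<open>d = b0\<close> by simp
      finally show ?thesis .
    next
      case False
      hence cnt: "count_list (c # cs @ [d]) b0 - 1 = 0" using \<open>d = b0\<close>
        by (auto simp: count_list_0_iff)
      have "Cw G A B c (cs @ [d]) \<subseteq> selAB A B b0"
        unfolding Cw_snoc using \<open>d = b0\<close> commg_le_right[OF H nsub_sub[OF Cn] X(1)] by simp
      thus ?thesis using cnt by simp
    qed
  next
    case False
    hence in0: "b0 \<in> set (c # cs)" using snoc by auto
    hence IH: "Cw G A B c cs \<subseteq> LC G (selAB A B b0) (count_list (c # cs) b0 - 1)" using snoc by blast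
    have "Cw G A B c (cs @ [d]) \<subseteq> Cw G A B c cs"
      unfolding Cw_snoc by (rule commg_le_left[OF H Cn nsub_sub[OF X(2)]])
    moreover have eqc: "count_list (c # cs @ [d]) b0 = count_list (c # cs) b0" using False by simp
    ultimately show ?thesis using IH by (metis subset_trans)
  qed
qed

theorem fitting_pair:
  assumes H: "subgroup H G" and A: "nsub G H A" and B: "nsub G H B"
    and a: "LC G A na = {\<one>}" and b: "LC G B nb = {\<one>}"
  shows "LC G (A <#> B) (na + nb) = {\<one>}"
proof -
  have "\<Union>{Cw G A B c cs | c cs. length cs = na + nb} \<subseteq> {\<one>}"
  proof (intro Union_least, clarify)
    fix c cs x assume len: "length cs = na + nb" and x: "x \<in> Cw G A B c cs"
    have tot: "count_list (c # cs) True + count_list (c # cs) False = na + nb + 1"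
      using count_TF[of "c # cs"] len by simp
    show "x = \<one>"
    proof (cases "count_list (c # cs) True \<ge> na + 1")
      case True
      hence "True \<in> set (c # cs)" by (metis count_list_0_iff not_one_le_zero add_is_0 zero_neq_one le_zero_eq)
      hence "Cw G A B c cs \<subseteq> LC G (selAB A B True) (count_list (c # cs) True - 1)"
        using Cw_count[OF H A B, of True c cs] by blast
      hence "Cw G A B c cs \<subseteq> LC G A (count_list (c # cs) True - 1)" by (simp add: selAB_def)
      also have "\<dots> = {\<one>}" using LC_one[OF H A a] True by simp
      finally show ?thesis using x by blast
    next
      case False
      hence F: "count_list (c # cs) False \<ge> nb + 1" using tot by simp
      hence "False \<in> set (c # cs)" by (metis count_list_0_iff not_one_le_zero add_is_0 zero_neq_one le_zero_eq)
      hence "Cw G A B c cs \<subseteq> LC G (selAB A B False) (count_list (c # cs) False - 1)"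
        using Cw_count[OF H A B, of False c cs] by blast
      hence "Cw G A B c cs \<subseteq> LC G B (count_list (c # cs) False - 1)" by (simp add: selAB_def)
      also have "\<dots> = {\<one>}" using LC_one[OF H B b] F by simp
      finally show ?thesis using x by blast
    qed
  qed
  hence "TW G A B (na + nb) \<subseteq> {\<one>}" unfolding TW_def using mono_generate generate_one by blast
  moreover have "\<one> \<in> LC G (A <#> B) (na + nb)"
    using subgroup.one_closed[OF nsub_subgroup[OF LC_nsub[OF H prod_nsub[OF H A B]]]] .
  ultimately show ?thesis using TW_step[OF H A B, of "na + nb"] by blast
qed

end

context group begin

lemma LC_carrier: "K \<subseteq> carrier G \<Longrightarrow> LC G K n \<subseteq> carrier G"
  by (induction n) (auto simp: commg_def dest: generate_incl[OF cset_carrier])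

lemma conj_hom: "g \<in> carrier G \<Longrightarrow> group_hom G G (\<lambda>x. g \<otimes> x \<otimes> inv g)"
  unfolding group_hom_def group_hom_axioms_def hom_def
  by (auto simp: is_group m_assoc)

lemma cset_conj:
  assumes g: "g \<in> carrier G" and A: "A \<subseteq> carrier G" and B: "B \<subseteq> carrier G"
  shows "cset G ((\<lambda>x. g \<otimes> x \<otimes> inv g) ` A) ((\<lambda>x. g \<otimes> x \<otimes> inv g) ` B) = (\<lambda>x. g \<otimes> x \<otimes> inv g) ` cset G A B"
proof (intro equalityI subsetI)
  fix s assume "s \<in> cset G ((\<lambda>x. g \<otimes> x \<otimes> inv g) ` A) ((\<lambda>x. g \<otimes> x \<otimes> inv g) ` B)"
  then obtain a b where ab: "a \<in> A" "b \<in> B"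
    "s = (g \<otimes> a \<otimes> inv g) \<otimes> (g \<otimes> b \<otimes> inv g) \<otimes> inv (g \<otimes> a \<otimes> inv g) \<otimes> inv (g \<otimes> b \<otimes> inv g)"
    unfolding cset_def by blast
  have c: "a \<in> carrier G" "b \<in> carrier G" using ab A B by blast+
  have "s = g \<otimes> (a \<otimes> b \<otimes> inv a \<otimes> inv b) \<otimes> inv g" using conj_comm[OF g c] ab(3) by simp
  moreover have "a \<otimes> b \<otimes> inv a \<otimes> inv b \<in> cset G A B" unfolding cset_def using ab by blast
  ultimately show "s \<in> (\<lambda>x. g \<otimes> x \<otimes> inv g) ` cset G A B" by blast
next
  fix s assume "s \<in> (\<lambda>x. g \<otimes> x \<otimes> inv g) ` cset G A B"
  then obtain a b where ab: "a \<in> A" "b \<in> B" "s = g \<otimes> (a \<otimes> b \<otimes> inv a \<otimes> inv b) \<otimes> inv g"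
    unfolding cset_def by blast
  have c: "a \<in> carrier G" "b \<in> carrier G" using ab A B by blast+
  have "s = (g \<otimes> a \<otimes> inv g) \<otimes> (g \<otimes> b \<otimes> inv g) \<otimes> inv (g \<otimes> a \<otimes> inv g) \<otimes> inv (g \<otimes> b \<otimes> inv g)"
    using conj_comm[OF g c] ab(3) by simp
  thus "s \<in> cset G ((\<lambda>x. g \<otimes> x \<otimes> inv g) ` A) ((\<lambda>x. g \<otimes> x \<otimes> inv g) ` B)"
    unfolding cset_def using ab by blast
qed

lemma LC_conj:
  assumes g: "g \<in> carrier G" and K: "K \<subseteq> carrier G"
  shows "LC G ((\<lambda>x. g \<otimes> x \<otimes> inv g) ` K) n = (\<lambda>x. g \<otimes> x \<otimes> inv g) ` LC G K n"
proof (induction n)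
  case 0 thus ?case by simp
next
  case (Suc n)
  interpret c: group_hom G G "\<lambda>x. g \<otimes> x \<otimes> inv g" by (rule conj_hom[OF g])
  have "LC G ((\<lambda>x. g \<otimes> x \<otimes> inv g) ` K) (Suc n)
     = generate G (cset G ((\<lambda>x. g \<otimes> x \<otimes> inv g) ` LC G K n) ((\<lambda>x. g \<otimes> x \<otimes> inv g) ` K))"
    using Suc by (simp add: commg_def)
  also have "\<dots> = generate G ((\<lambda>x. g \<otimes> x \<otimes> inv g) ` cset G (LC G K n) K)"
    using cset_conj[OF g LC_carrier[OF K] K] by simp
  also have "\<dots> = (\<lambda>x. g \<otimes> x \<otimes> inv g) ` generate G (cset G (LC G K n) K)"
    by (rule c.generate_img[OF cset_carrier[OF LC_carrier[OF K] K]])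
  finally show ?case by (simp add: commg_def)
qed

lemma nsub_conj_img:
  assumes H: "H \<lhd> G" and g: "g \<in> carrier G" and N: "nsub G H N"
  shows "nsub G H ((\<lambda>x. g \<otimes> x \<otimes> inv g) ` N)"
proof -
  interpret c: group_hom G G "\<lambda>x. g \<otimes> x \<otimes> inv g" by (rule conj_hom[OF g])
  have sH: "subgroup H G" using normal_imp_subgroup[OF H] .
  have Hc: "H \<subseteq> carrier G" using subgroup.subset[OF sH] .
  have NH: "N \<subseteq> H" using nsub_sub[OF N] .
  have sg: "subgroup ((\<lambda>x. g \<otimes> x \<otimes> inv g) ` N) G"
    using c.subgroup_img_is_subgroup[OF nsub_subgroup[OF N]] by simp
  have sub: "(\<lambda>x. g \<otimes> x \<otimes> inv g) ` N \<subseteq> H"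
    using NH normal.inv_op_closed2[OF H g] by blast
  have "\<forall>h\<in>H. \<forall>y\<in>(\<lambda>x. g \<otimes> x \<otimes> inv g) ` N. h \<otimes> y \<otimes> inv h \<in> (\<lambda>x. g \<otimes> x \<otimes> inv g) ` N"
  proof (intro ballI)
    fix h y assume h: "h \<in> H" and "y \<in> (\<lambda>x. g \<otimes> x \<otimes> inv g) ` N"
    then obtain n where n: "n \<in> N" "y = g \<otimes> n \<otimes> inv g" by blast
    define h' where "h' = inv g \<otimes> h \<otimes> g"
    have h'H: "h' \<in> H" unfolding h'_def using normal.inv_op_closed1[OF H g h] .
    have c: "h \<in> carrier G" "n \<in> carrier G" using h n NH Hc by blast+
    have "h \<otimes> y \<otimes> inv h = g \<otimes> (h' \<otimes> n \<otimes> inv h') \<otimes> inv g"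
      unfolding h'_def n(2) using c g by (simp add: m_assoc inv_mult_group)
    moreover have "h' \<otimes> n \<otimes> inv h' \<in> N" using nsub_conj[OF N h'H n(1)] .
    ultimately show "h \<otimes> y \<otimes> inv h \<in> (\<lambda>x. g \<otimes> x \<otimes> inv g) ` N" by blast
  qed
  thus ?thesis unfolding nsub_def using sg sub by blast
qed

lemma generate_subgroup_eq: "subgroup K G \<Longrightarrow> generate G K = K"
  using generate_subgroup_incl[of K K] generate.incl[of _ K G] by blast

lemma fit_max:
  assumes H: "subgroup H G" and fin: "finite H"
  shows "\<exists>N. nsub G H N \<and> (\<exists>n. LC G N n = {\<one>}) \<and> (\<forall>M. nsub G H M \<and> (\<exists>n. LC G M n = {\<one>}) \<longrightarrow> M \<subseteq> N)
     \<and> Fitting (G\<lparr>carrier := H\<rparr>) = N"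
proof -
  define Fam where "Fam = {N. nsub G H N \<and> (\<exists>n. LC G N n = {\<one>})}"
  have "Fam \<subseteq> Pow H" unfolding Fam_def nsub_def by blast
  hence finF: "finite Fam" using fin finite_subset by blast
  have "{\<one>} \<in> Fam" unfolding Fam_def using nsub_one[OF H] by (auto intro!: exI[of _ 0])
  hence ne: "Fam \<noteq> {}" by blast
  define m where "m = Max (card ` Fam)"
  have "m \<in> card ` Fam" unfolding m_def using finF ne by simp
  then obtain N where N: "N \<in> Fam" "card N = m" by blast
  have le: "card M \<le> m" if "M \<in> Fam" for M unfolding m_def using finF that by simp
  have maxN: "M \<subseteq> N" if M: "M \<in> Fam" for M
  proof -
    from N(1) obtain a where Na: "nsub G H N" "LC G N a = {\<one>}" unfolding Fam_def by blast
    from M obtain b where Mb: "nsub G H M" "LC G M b = {\<one>}" unfolding Fam_def by blast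
    have P: "N <#> M \<in> Fam" unfolding Fam_def
      using prod_nsub[OF H Na(1) Mb(1)] fitting_pair[OF H Na(1) Mb(1) Na(2) Mb(2)] by blast
    have Nc: "N \<subseteq> carrier G" "M \<subseteq> carrier G" using Na(1) Mb(1) nsub_sub H subgroup.subset by blast+
    have sub1: "N \<subseteq> N <#> M"
    proof
      fix x assume "x \<in> N" thus "x \<in> N <#> M"
        using setmultI[of x N \<one> M] subgroup.one_closed[OF nsub_subgroup[OF Mb(1)]] Nc by auto
    qed
    have sub2: "M \<subseteq> N <#> M"
    proof
      fix x assume "x \<in> M" thus "x \<in> N <#> M"
        using setmultI[of \<one> N x M] subgroup.one_closed[OF nsub_subgroup[OF Na(1)]] Nc by auto
    qed
    have finP: "finite (N <#> M)" using P fin unfolding Fam_def nsub_def using finite_subset by blast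
    have "card (N <#> M) \<le> card N" using le[OF P] N(2) by simp
    hence "N <#> M = N" using card_subset_eq[OF finP sub1] card_mono[OF finP sub1] by simp
    thus ?thesis using sub2 by blast
  qed
  have NF: "nsub G H N" "\<exists>n. LC G N n = {\<one>}" using N(1) unfolding Fam_def by blast+
  have set_eq: "{M. M \<lhd> G\<lparr>carrier := H\<rparr> \<and> nilpotent_group (G\<lparr>carrier := H\<rparr>\<lparr>carrier := M\<rparr>)} = Fam"
    unfolding Fam_def using nsub_iff[OF H] nilpotent_iff nsub_subgroup by auto
  have U: "\<Union>Fam = N" using maxN N(1) by blast
  have "Fitting (G\<lparr>carrier := H\<rparr>) = generate (G\<lparr>carrier := H\<rparr>) N"
    unfolding Fitting_def set_eq U ..
  also have "\<dots> = generate G N" using generate_consistent[OF nsub_sub[OF NF(1)] H] .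
  also have "\<dots> = N" using generate_subgroup_eq[OF nsub_subgroup[OF NF(1)]] .
  finally show ?thesis using NF maxN unfolding Fam_def by blast
qed

end

context group begin

lemma derived_eq_commg: "derived G K = commg G K K"
  unfolding derived_def commg_def cset_def by (rule arg_cong[of _ _ "generate G"]) blast

lemma derived_iter_consistent:
  assumes H: "subgroup H G"
  shows "(derived (G\<lparr>carrier := H\<rparr>) ^^ k) H = (derived G ^^ k) H"
proof (induction k)
  case 0 thus ?case by simp
next
  case (Suc k)
  have "(derived G ^^ j) H \<subseteq> H" for j
  proof (induction j)
    case 0 thus ?case by simp
  next
    case (Suc j) thus ?case using derived_incl[OF Suc H] by simp
  qed
  hence "(derived G ^^ k) H \<subseteq> H" .
  thus ?case using Suc derived_consistent[OF _ H] by simp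
qed

lemma solvable_sub_derived:
  assumes H: "subgroup H G" and sol: "solvable (G\<lparr>carrier := H\<rparr>)"
  shows "\<exists>k. (derived G ^^ k) H = {\<one>}"
proof -
  interpret GH: group "G\<lparr>carrier := H\<rparr>" using subgroup.subgroup_is_group[OF H is_group] .
  obtain k where "(derived (G\<lparr>carrier := H\<rparr>) ^^ k) (carrier (G\<lparr>carrier := H\<rparr>)) = {\<one>\<^bsub>G\<lparr>carrier := H\<rparr>\<^esub>}"
    using sol GH.solvable_iff_trivial_derived_seq by blast
  thus ?thesis using derived_iter_consistent[OF H] by auto
qed

lemma centralizer_sub:
  assumes HG: "H \<lhd> G" and sol: "solvable (G\<lparr>carrier := H\<rparr>)"
    and F: "F \<lhd> G" and FH: "F \<subseteq> H"
    and max: "\<And>M. M \<lhd> G \<Longrightarrow> (\<exists>n. LC G M n = {\<one>}) \<Longrightarrow> M \<subseteq> F"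
  shows "{h \<in> H. \<forall>f \<in> F. h \<otimes> f = f \<otimes> h} \<subseteq> F"
proof -
  define C where "C = {h \<in> H. \<forall>f \<in> F. h \<otimes> f = f \<otimes> h}"
  have sH: "subgroup H G" using normal_imp_subgroup[OF HG] .
  have sF: "subgroup F G" using normal_imp_subgroup[OF F] .
  have Hc: "H \<subseteq> carrier G" using subgroup.subset[OF sH] .
  have Fc: "F \<subseteq> carrier G" using subgroup.subset[OF sF] .
  have CH: "C \<subseteq> H" unfolding C_def by blast
  have Cn: "C \<lhd> G"
  proof -
    have sC: "subgroup C G"
    proof (rule subgroupI)
      show "C \<subseteq> carrier G" using CH Hc by blast
      have "\<And>f. f \<in> F \<Longrightarrow> \<one> \<otimes> f = f \<otimes> \<one>" using Fc by auto
      hence "\<one> \<in> C" unfolding C_def using subgroup.one_closed[OF sH] by blast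
      thus "C \<noteq> {}" by blast
    next
      fix a assume a: "a \<in> C"
      have ac: "a \<in> carrier G" using a CH Hc by blast
      show "inv a \<in> C" unfolding C_def
      proof (intro CollectI conjI ballI)
        show "inv a \<in> H" using a CH subgroup.m_inv_closed[OF sH] by blast
        fix f assume f: "f \<in> F"
        have fc: "f \<in> carrier G" using f Fc by blast
        have "a \<otimes> f = f \<otimes> a" using a f unfolding C_def by blast
        hence "inv a \<otimes> (a \<otimes> f) \<otimes> inv a = inv a \<otimes> (f \<otimes> a) \<otimes> inv a" by simp
        thus "inv a \<otimes> f = f \<otimes> inv a" using ac fc by (simp add: m_assoc)
      qed
    next
      fix a b assume a: "a \<in> C" and b: "b \<in> C"
      have c: "a \<in> carrier G" "b \<in> carrier G" using a b CH Hc by blast+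
      show "a \<otimes> b \<in> C" unfolding C_def
      proof (intro CollectI conjI ballI)
        show "a \<otimes> b \<in> H" using a b CH subgroup.m_closed[OF sH] by blast
        fix f assume f: "f \<in> F"
        have fc: "f \<in> carrier G" using f Fc by blast
        have "a \<otimes> f = f \<otimes> a" "b \<otimes> f = f \<otimes> b" using a b f unfolding C_def by blast+
        thus "a \<otimes> b \<otimes> f = f \<otimes> (a \<otimes> b)" using c fc by (metis m_assoc)
      qed
    qed
    have "\<forall>g\<in>carrier G. \<forall>c\<in>C. g \<otimes> c \<otimes> inv g \<in> C"
    proof (intro ballI)
      fix g c assume g: "g \<in> carrier G" and c: "c \<in> C"
      have cc: "c \<in> carrier G" using c CH Hc by blast
      show "g \<otimes> c \<otimes> inv g \<in> C" unfolding C_def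
      proof (intro CollectI conjI ballI)
        show "g \<otimes> c \<otimes> inv g \<in> H" using normal.inv_op_closed2[OF HG g] c CH by blast
        fix f assume f: "f \<in> F"
        have fc: "f \<in> carrier G" using f Fc by blast
        define f' where "f' = inv g \<otimes> f \<otimes> g"
        have f'F: "f' \<in> F" unfolding f'_def using normal.inv_op_closed1[OF F g f] .
        have f'c: "f' \<in> carrier G" using f'F Fc by blast
        have com: "c \<otimes> f' = f' \<otimes> c" using c f'F unfolding C_def by blast
        have ff: "f = g \<otimes> f' \<otimes> inv g" unfolding f'_def using g fc by (simp add: m_assoc)
        have "g \<otimes> c \<otimes> inv g \<otimes> f = g \<otimes> (c \<otimes> f') \<otimes> inv g" unfolding ff using g cc f'c by (simp add: m_assoc)
        also have "\<dots> = g \<otimes> (f' \<otimes> c) \<otimes> inv g" using com by simp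
        also have "\<dots> = f \<otimes> (g \<otimes> c \<otimes> inv g)" unfolding ff using g cc f'c by (simp add: m_assoc)
        finally show "g \<otimes> c \<otimes> inv g \<otimes> f = f \<otimes> (g \<otimes> c \<otimes> inv g)" .
      qed
    qed
    thus ?thesis using normal_inv_iff sC by blast
  qed
  define D where "D n = (derived G ^^ n) C" for n
  have Dn: "D n \<lhd> G" for n unfolding D_def
    by (induction n) (auto intro: derived_is_normal Cn)
  have DC: "D n \<subseteq> C" for n unfolding D_def
  proof (induction n)
    case 0 thus ?case by simp
  next
    case (Suc j) thus ?case using derived_incl[OF Suc normal_imp_subgroup[OF Cn]] by simp
  qed
  obtain k where k: "(derived G ^^ k) H = {\<one>}" using solvable_sub_derived[OF sH sol] by blast
  have "D k \<subseteq> (derived G ^^ k) H" unfolding D_def by (rule mono_exp_of_derived[OF CH])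
  hence ex: "D k \<subseteq> F" using k subgroup.one_closed[OF sF] by auto
  define n0 where "n0 = (LEAST n. D n \<subseteq> F)"
  have n0: "D n0 \<subseteq> F" unfolding n0_def by (rule LeastI[of "\<lambda>n. D n \<subseteq> F", OF ex])
  show ?thesis
  proof (cases n0)
    case 0 thus ?thesis using n0 unfolding C_def D_def by simp
  next
    case (Suc j)
    have notj: "\<not> D j \<subseteq> F" using not_less_Least[of j "\<lambda>n. D n \<subseteq> F"] Suc unfolding n0_def by simp
    define K where "K = D j"
    have Kn: "K \<lhd> G" unfolding K_def by (rule Dn)
    have KC: "K \<subseteq> C" unfolding K_def by (rule DC)
    have Kc: "K \<subseteq> carrier G" using KC CH Hc by blast
    have dK: "derived G K \<subseteq> F" using n0 Suc unfolding K_def D_def by simp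
    have L1: "LC G K 1 \<subseteq> F" using dK by (simp add: derived_eq_commg)
    have "cset G (LC G K 1) K \<subseteq> {\<one>}"
    proof
      fix s assume "s \<in> cset G (LC G K 1) K"
      then obtain x y where xy: "x \<in> LC G K 1" "y \<in> K" "s = x \<otimes> y \<otimes> inv x \<otimes> inv y"
        unfolding cset_def by blast
      have xF: "x \<in> F" using xy L1 by blast
      have c: "x \<in> carrier G" "y \<in> carrier G" using xF Fc xy Kc by blast+
      have "y \<otimes> x = x \<otimes> y" using xy(2) KC xF unfolding C_def by blast
      hence "s = x \<otimes> y \<otimes> inv y \<otimes> inv x" unfolding xy(3) using c
        by (metis inv_mult_group m_assoc m_closed inv_closed)
      thus "s \<in> {\<one>}" using c by (simp add: m_assoc)
    qed
    hence "LC G K 2 = {\<one>}" using commg_trivial by (simp add: numeral_2_eq_2)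
    hence "K \<subseteq> F" using max[OF Kn] by blast
    thus ?thesis using notj unfolding K_def by blast
  qed
qed

end


lemma prod_primes_dvd:
  fixes S :: "nat set"
  assumes "finite S" "\<forall>p\<in>S. Factorial_Ring.prime p" "\<forall>q\<in>S. q dvd n"
  shows "(\<Prod>p\<in>S. p) dvd n"
  using assms
proof (induction S rule: finite_induct)
  case empty thus ?case by simp
next
  case (insert p S)
  have cop: "coprime p (\<Prod>q\<in>S. q)"
  proof (rule prod_coprime_right)
    fix q assume "q \<in> S"
    thus "coprime p q" using insert primes_coprime[of p q] by auto
  qed
  show ?case using insert divides_mult[OF _ _ cop] by simp
qed

lemma nt_setup:
  fixes S :: "nat set"
  assumes fin: "finite S" and pr: "\<forall>p\<in>S. Factorial_Ring.prime p"
  shows "\<exists>e. (\<forall>p\<in>S. e p mod p = 1) \<and> (\<forall>p\<in>S. \<forall>q\<in>S. q \<noteq> p \<longrightarrow> q dvd e p)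
            \<and> (\<forall>p\<in>S. (\<Prod>q\<in>S. q) dvd e p * p)"
proof -
  have ex: "\<exists>u. ((\<Prod>q\<in>S - {p}. q) * u) mod p = 1" if p: "p \<in> S" for p
  proof -
    have pp: "Factorial_Ring.prime p" using pr p by blast
    have cop: "coprime (\<Prod>q\<in>S - {p}. q) p"
    proof (rule prod_coprime_left)
      fix q assume "q \<in> S - {p}"
      thus "coprime q p" using pr p primes_coprime[of q p] by auto
    qed
    have nz: "(\<Prod>q\<in>S - {p}. q) \<noteq> 0" using pr fin by (auto simp: prime_gt_0_nat)
    obtain x y where xy: "(\<Prod>q\<in>S - {p}. q) * x = p * y + gcd (\<Prod>q\<in>S - {p}. q) p"
      using bezout_nat[OF nz] by blast
    have "gcd (\<Prod>q\<in>S - {p}. q) p = 1" using cop by simp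
    hence "((\<Prod>q\<in>S - {p}. q) * x) mod p = (p * y + 1) mod p" using xy by simp
    also have "\<dots> = 1 mod p" by (metis mod_mult_self2 add.commute mult.commute)
    also have "\<dots> = 1" using prime_gt_1_nat[OF pp] by simp
    finally show ?thesis by blast
  qed
  define u where "u p = (SOME u. ((\<Prod>q\<in>S - {p}. q) * u) mod p = 1)" for p
  define e where "e p = (\<Prod>q\<in>S - {p}. q) * u p" for p
  have e1: "\<forall>p\<in>S. e p mod p = 1"
  proof
    fix p assume "p \<in> S"
    from someI_ex[OF ex[OF this]] show "e p mod p = 1" unfolding e_def u_def .
  qed
  have e2: "\<forall>p\<in>S. \<forall>q\<in>S. q \<noteq> p \<longrightarrow> q dvd e p"
  proof (intro ballI impI)
    fix p q assume "p \<in> S" "q \<in> S" "q \<noteq> p"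
    hence "q dvd (\<Prod>q\<in>S - {p}. q)" using fin by (intro dvd_prodI) auto
    thus "q dvd e p" unfolding e_def by simp
  qed
  have e3: "\<forall>p\<in>S. (\<Prod>q\<in>S. q) dvd e p * p"
  proof
    fix p assume p: "p \<in> S"
    have "(\<Prod>q\<in>S. q) = p * (\<Prod>q\<in>S - {p}. q)" using fin p by (simp add: prod.remove)
    thus "(\<Prod>q\<in>S. q) dvd e p * p" unfolding e_def by simp
  qed
  show ?thesis using e1 e2 e3 by blast
qed


definition Ep :: "('x, 'y) monoid_scheme \<Rightarrow> nat \<Rightarrow> 'x monoid" where
  "Ep M p = \<lparr>carrier = {x \<in> carrier M. x [^]\<^bsub>M\<^esub> p = \<one>\<^bsub>M\<^esub>}, monoid.mult = monoid.mult M, one = one M\<rparr>"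

lemma Ep_pow: "x [^]\<^bsub>Ep M p\<^esub> (n::nat) = x [^]\<^bsub>M\<^esub> n"
  unfolding nat_pow_def Ep_def by simp

lemma Ep_simps [simp]: "carrier (Ep M p) = {x \<in> carrier M. x [^]\<^bsub>M\<^esub> p = \<one>\<^bsub>M\<^esub>}"
  "monoid.mult (Ep M p) = monoid.mult M" "one (Ep M p) = one M"
  unfolding Ep_def by simp_all

context comm_group begin

lemma pow_mod_eq: "x \<in> carrier G \<Longrightarrow> x [^] q = \<one> \<Longrightarrow> x [^] (n::nat) = x [^] (n mod q)"
proof -
  assume x: "x \<in> carrier G" and q: "x [^] q = \<one>"
  have "x [^] n = x [^] (q * (n div q)) \<otimes> x [^] (n mod q)"
    using nat_pow_mult[OF x, of "q * (n div q)" "n mod q"] by simp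
  also have "x [^] (q * (n div q)) = \<one>" using nat_pow_pow[OF x, of q "n div q"] q by simp
  finally show ?thesis using x by simp
qed

lemma pow_dvd_one: "x \<in> carrier G \<Longrightarrow> x [^] q = \<one> \<Longrightarrow> q dvd (n::nat) \<Longrightarrow> x [^] n = \<one>"
  using pow_mod_eq[of x q n] by simp

lemma Ep_group: "comm_group (Ep G p)"
proof (rule comm_groupI)
  fix x y assume x: "x \<in> carrier (Ep G p)" and y: "y \<in> carrier (Ep G p)"
  thus "x \<otimes>\<^bsub>Ep G p\<^esub> y \<in> carrier (Ep G p)" by (simp add: nat_pow_distrib)
  show "x \<otimes>\<^bsub>Ep G p\<^esub> y = y \<otimes>\<^bsub>Ep G p\<^esub> x" using x y by (simp add: m_comm)
next
  show "\<one>\<^bsub>Ep G p\<^esub> \<in> carrier (Ep G p)" by simp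
next
  fix x y z assume "x \<in> carrier (Ep G p)" "y \<in> carrier (Ep G p)" "z \<in> carrier (Ep G p)"
  thus "x \<otimes>\<^bsub>Ep G p\<^esub> y \<otimes>\<^bsub>Ep G p\<^esub> z = x \<otimes>\<^bsub>Ep G p\<^esub> (y \<otimes>\<^bsub>Ep G p\<^esub> z)" by (simp add: m_assoc)
next
  fix x assume x: "x \<in> carrier (Ep G p)"
  thus "\<one>\<^bsub>Ep G p\<^esub> \<otimes>\<^bsub>Ep G p\<^esub> x = x" by simp
  have "inv x \<in> carrier (Ep G p)" using x by (simp add: nat_pow_inv)
  moreover have "inv x \<otimes>\<^bsub>Ep G p\<^esub> x = \<one>\<^bsub>Ep G p\<^esub>" using x by simp
  ultimately show "\<exists>y\<in>carrier (Ep G p). y \<otimes>\<^bsub>Ep G p\<^esub> x = \<one>\<^bsub>Ep G p\<^esub>" by blast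
qed

lemma Ep_elem: "Factorial_Ring.prime p \<Longrightarrow> elementary_abelian (Ep G p)"
  unfolding elementary_abelian_def using Ep_group by (auto simp: Ep_pow)

theorem decomp:
  fixes S :: "nat set"
  assumes fin: "finite S" and pr: "\<forall>p\<in>S. Factorial_Ring.prime p"
    and ex: "\<forall>x\<in>carrier G. x [^] (\<Prod>p\<in>S. p) = \<one>"
  shows "dprod_elem_abelian G"
proof -
  obtain e where e1: "\<forall>p\<in>S. e p mod p = 1" and e2: "\<forall>p\<in>S. \<forall>q\<in>S. q \<noteq> p \<longrightarrow> q dvd e p"
    and e3: "\<forall>p\<in>S. (\<Prod>q\<in>S. q) dvd e p * p" using nt_setup[OF fin pr] by blast
  define m where "m = (\<Prod>q\<in>S. q)"
  define P where "P = product_group S (Ep G)"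
  define \<phi> where "\<phi> x = (\<lambda>p\<in>S. x [^] e p)" for x
  have gP: "group P" unfolding P_def using Ep_group comm_group.axioms(2) by (intro product_group) blast
  have cP: "carrier P = (\<Pi>\<^sub>E p\<in>S. carrier (Ep G p))" unfolding P_def by simp
  have phic: "\<phi> x \<in> carrier P" if x: "x \<in> carrier G" for x
  proof -
    have "x [^] e p \<in> carrier (Ep G p)" if p: "p \<in> S" for p
    proof -
      have "(x [^] e p) [^] p = x [^] (e p * p)" using nat_pow_pow[OF x] by simp
      also have "\<dots> = \<one>"
      proof -
        have xm: "x [^] (\<Prod>q\<in>S. q) = \<one>" using ex x by blast
        have "(\<Prod>q\<in>S. q) dvd e p * p" using e3 p by blast
        thus ?thesis by (rule pow_dvd_one[OF x xm])
      qed
      finally show ?thesis using x by simp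
    qed
    thus ?thesis unfolding cP \<phi>_def by (intro iffD2[OF restrict_PiE_iff]) blast
  qed
  have hom: "\<phi> \<in> hom G P"
  proof (rule homI)
    fix x assume "x \<in> carrier G" thus "\<phi> x \<in> carrier P" by (rule phic)
  next
    fix x y assume x: "x \<in> carrier G" and y: "y \<in> carrier G"
    show "\<phi> (x \<otimes> y) = \<phi> x \<otimes>\<^bsub>P\<^esub> \<phi> y"
      unfolding P_def \<phi>_def mult_product_group by (intro restrict_ext) (simp add: nat_pow_distrib x y)
  qed
  have kernel: "x = \<one>" if x: "x \<in> carrier G" and k: "\<forall>p\<in>S. x [^] e p = \<one>" for x
  proof (cases "S = {}")
    case True
    thus ?thesis using ex x by simp
  next
    case False
    define s where "s = (\<Sum>p\<in>S. e p)"
    have sum1: "x [^] (\<Sum>p\<in>T. e p) = \<one>" if "T \<subseteq> S" for T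
      using finite_subset[OF that fin] that
    proof (induction T rule: finite_induct)
      case empty thus ?case by simp
    next
      case (insert p T)
      thus ?case using k x nat_pow_mult[OF x, of "e p" "sum e T"] by simp
    qed
    have smod: "s mod q = 1" if q: "q \<in> S" for q
    proof -
      have "s = e q + (\<Sum>p\<in>S - {q}. e p)" unfolding s_def using fin q by (simp add: sum.remove)
      moreover have "q dvd (\<Sum>p\<in>S - {q}. e p)" using e2 q by (intro dvd_sum) auto
      ultimately have "s mod q = e q mod q" by auto
      thus ?thesis using e1 q by simp
    qed
    obtain q0 where q0: "q0 \<in> S" using False by blast
    have s1: "s \<ge> 1" using smod[OF q0] by (cases s) auto
    have "\<forall>q\<in>S. q dvd s - 1"
    proof
      fix q assume q: "q \<in> S"
      have "s div q * q + s mod q = s" by (rule div_mult_mod_eq)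
      hence "s - 1 = s div q * q" using smod[OF q] by simp
      hence "(s - 1) mod q = 0" by simp
      thus "q dvd s - 1" by (simp add: dvd_eq_mod_eq_0)
    qed
    hence "m dvd s - 1" unfolding m_def using prod_primes_dvd[OF fin pr] by blast
    hence "x [^] (s - 1) = \<one>" using pow_dvd_one[OF x] ex x unfolding m_def by blast
    moreover have "x [^] s = \<one>" unfolding s_def using sum1 by blast
    moreover have "x [^] s = x [^] (s - 1) \<otimes> x"
    proof -
      have "s = Suc (s - 1)" using s1 by simp
      hence "x [^] s = x [^] (Suc (s - 1))" by simp
      thus ?thesis by simp
    qed
    ultimately show ?thesis using x by simp
  qed
  have inj: "inj_on \<phi> (carrier G)"
  proof (rule inj_onI)
    fix x y assume x: "x \<in> carrier G" and y: "y \<in> carrier G" and eq: "\<phi> x = \<phi> y"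
    have "\<forall>p\<in>S. (x \<otimes> inv y) [^] e p = \<one>"
    proof
      fix p assume p: "p \<in> S"
      have "x [^] e p = y [^] e p" using eq p unfolding \<phi>_def by (metis restrict_apply')
      thus "(x \<otimes> inv y) [^] e p = \<one>" using x y by (simp add: nat_pow_distrib nat_pow_inv)
    qed
    hence "x \<otimes> inv y = \<one>" using kernel x y by simp
    moreover have "x = (x \<otimes> inv y) \<otimes> y" using x y by (simp add: m_assoc)
    ultimately show "x = y" using y by simp
  qed
  have surj: "\<phi> ` carrier G = carrier P"
  proof
    show "\<phi> ` carrier G \<subseteq> carrier P" using phic by blast
  next
    show "carrier P \<subseteq> \<phi> ` carrier G"
    proof
      fix y assume y: "y \<in> carrier P"
      have yc: "y p \<in> carrier G" "y p [^] p = \<one>" if "p \<in> S" for p using y that unfolding cP by auto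
      have yPi: "y \<in> S \<rightarrow> carrier G" using yc by blast
      define x where "x = finprod G y S"
      have xc: "x \<in> carrier G" unfolding x_def using yPi by simp
      have key: "finprod G y T [^] e q = (if q \<in> T then y q else \<one>)" if q: "q \<in> S" and T: "T \<subseteq> S" for q T
        using finite_subset[OF T fin] T
      proof (induction T rule: finite_induct)
        case empty thus ?case by simp
      next
        case (insert a T)
        have a: "a \<in> S" using insert by blast
        have TPi: "y \<in> T \<rightarrow> carrier G" using yPi insert by blast
        have "finprod G y (insert a T) [^] e q = (y a \<otimes> finprod G y T) [^] e q"
          using insert TPi yc[OF a] by simp
        also have "\<dots> = y a [^] e q \<otimes> finprod G y T [^] e q"
          using TPi yc[OF a] by (simp add: nat_pow_distrib)
        also have "y a [^] e q = (if a = q then y a else \<one>)"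
        proof (cases "a = q")
          case True
          have "y a [^] e q = y a [^] (e q mod q)" using pow_mod_eq yc[OF a] True by blast
          thus ?thesis using e1 q True yc[OF a] by simp
        next
          case False
          hence "a dvd e q" using e2 q a by blast
          thus ?thesis using pow_dvd_one[OF yc(1)[OF a] yc(2)[OF a]] False by simp
        qed
        finally have eq: "finprod G y (insert a T) [^] e q = (if a = q then y a else \<one>) \<otimes> finprod G y T [^] e q" .
        have yq: "y q \<in> carrier G" using yc(1)[OF q] .
        show ?case
        proof (cases "a = q")
          case True
          hence "q \<notin> T" using insert.hyps(2) by blast
          thus ?thesis using eq insert.IH insert.prems True yq by simp
        next
          case False
          thus ?thesis using eq insert.IH insert.prems yq by simp
        qed
      qed
      have "\<phi> x = (\<lambda>q\<in>S. y q)" unfolding \<phi>_def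
      proof (intro restrict_ext)
        fix q assume q: "q \<in> S"
        have "(if q \<in> S then y q else \<one>) = y q" using q by (rule if_P)
        thus "x [^] e q = y q" unfolding x_def using key[OF q subset_refl] by (rule trans[rotated])
      qed
      also have "\<dots> = y" using PiE_restrict[of y S] y unfolding cP by blast
      finally have "\<phi> x = y" .
      thus "y \<in> \<phi> ` carrier G" using xc by blast
    qed
  qed
  have "\<phi> \<in> iso G P" unfolding iso_def bij_betw_def using hom inj surj by blast
  hence "G \<cong> P" unfolding is_iso_def by blast
  moreover have "\<forall>p\<in>S. elementary_abelian (Ep G p)" using Ep_elem pr by blast
  ultimately show ?thesis unfolding dprod_elem_abelian_def P_def using fin by blast
qed

end


lemma (in monoid) mpow_dvd_one: "x \<in> carrier G \<Longrightarrow> x [^] q = \<one> \<Longrightarrow> q dvd (n::nat) \<Longrightarrow> x [^] n = \<one>"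
  by (auto simp: nat_pow_pow[symmetric] elim!: dvdE)

lemma pow_product:
  assumes gr: "\<And>i. i \<in> I \<Longrightarrow> group (E i)" and x: "x \<in> carrier (product_group I E)"
  shows "x [^]\<^bsub>product_group I E\<^esub> (n::nat) = (\<lambda>i\<in>I. x i [^]\<^bsub>E i\<^esub> n)"
proof (induction n)
  case 0 show ?case by (simp only: nat_pow_0 one_product_group)
next
  case (Suc n)
  have "x [^]\<^bsub>product_group I E\<^esub> Suc n = x [^]\<^bsub>product_group I E\<^esub> n \<otimes>\<^bsub>product_group I E\<^esub> x"
    by (rule nat_pow_Suc)
  also have "\<dots> = (\<lambda>i\<in>I. x i [^]\<^bsub>E i\<^esub> Suc n)"
    unfolding Suc mult_product_group
  proof (intro restrict_ext)
    fix i assume i: "i \<in> I"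
    show "restrict (\<lambda>i. x i [^]\<^bsub>E i\<^esub> n) I i \<otimes>\<^bsub>E i\<^esub> x i = x i [^]\<^bsub>E i\<^esub> Suc n"
      by (simp only: restrict_apply'[OF i] nat_pow_Suc)
  qed
  finally show ?case .
qed

lemma dprod_exp:
  fixes Q :: "('x, 'y) monoid_scheme"
  assumes Q: "group Q" and d: "dprod_elem_abelian Q"
  shows "\<exists>S::nat set. finite S \<and> (\<forall>p\<in>S. Factorial_Ring.prime p) \<and>
           (\<forall>q\<in>carrier Q. q [^]\<^bsub>Q\<^esub> (\<Prod>p\<in>S. p) = \<one>\<^bsub>Q\<^esub>)"
proof -
  obtain I :: "nat set" and E :: "nat \<Rightarrow> 'x monoid" where fin: "finite I" and el: "\<forall>i\<in>I. elementary_abelian (E i)"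
    and iso: "Q \<cong> product_group I E" using d unfolding dprod_elem_abelian_def by blast
  obtain \<phi> where phi: "\<phi> \<in> iso Q (product_group I E)" using iso unfolding is_iso_def by blast
  have cg: "comm_group (E i)" if "i \<in> I" for i using el that unfolding elementary_abelian_def by blast
  have gr: "group (E i)" if "i \<in> I" for i using cg[OF that] comm_group.axioms(2) by blast
  have "\<forall>i\<in>I. \<exists>p::nat. Factorial_Ring.prime p \<and> (\<forall>x\<in>carrier (E i). x [^]\<^bsub>E i\<^esub> p = \<one>\<^bsub>E i\<^esub>)"
    using el unfolding elementary_abelian_def by blast
  then obtain p :: "nat \<Rightarrow> nat" where p0: "\<forall>i\<in>I. Factorial_Ring.prime (p i) \<and> (\<forall>x\<in>carrier (E i). x [^]\<^bsub>E i\<^esub> p i = \<one>\<^bsub>E i\<^esub>)"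
    by (rule bchoice[elim_format]) blast
  have p: "Factorial_Ring.prime (p i) \<and> (\<forall>x\<in>carrier (E i). x [^]\<^bsub>E i\<^esub> p i = \<one>\<^bsub>E i\<^esub>)" if "i \<in> I" for i
    using p0 that by blast
  define S where "S = p ` I"
  have finS: "finite S" unfolding S_def using fin by simp
  have prS: "\<forall>q\<in>S. Factorial_Ring.prime q" unfolding S_def using p by blast
  have gP: "group (product_group I E)" using gr by (intro product_group) blast
  interpret h: group_hom Q "product_group I E" \<phi>
    using phi Q gP unfolding group_hom_def group_hom_axioms_def iso_def by blast
  have "q [^]\<^bsub>Q\<^esub> (\<Prod>p\<in>S. p) = \<one>\<^bsub>Q\<^esub>" if q: "q \<in> carrier Q" for q
  proof -
    have pq: "\<phi> q \<in> carrier (product_group I E)" using h.hom_closed[OF q] .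
    have "\<phi> (q [^]\<^bsub>Q\<^esub> (\<Prod>p\<in>S. p)) = \<phi> q [^]\<^bsub>product_group I E\<^esub> (\<Prod>p\<in>S. p)"
      using h.hom_nat_pow[OF q] .
    also have "\<dots> = (\<lambda>i\<in>I. \<phi> q i [^]\<^bsub>E i\<^esub> (\<Prod>p\<in>S. p))" using pow_product[OF gr pq] by blast
    also have "\<dots> = (\<lambda>i\<in>I. \<one>\<^bsub>E i\<^esub>)"
    proof (intro restrict_ext)
      fix i assume i: "i \<in> I"
      have c: "\<phi> q i \<in> carrier (E i)" using pq i by auto
      have "p i dvd (\<Prod>p\<in>S. p)" unfolding S_def using i fin by (intro dvd_prodI) auto
      thus "\<phi> q i [^]\<^bsub>E i\<^esub> (\<Prod>p\<in>S. p) = \<one>\<^bsub>E i\<^esub>"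
        using monoid.mpow_dvd_one[OF group.is_monoid[OF gr[OF i]] c] p[OF i] c by blast
    qed
    also have "\<dots> = \<phi> \<one>\<^bsub>Q\<^esub>" by simp
    finally have "\<phi> (q [^]\<^bsub>Q\<^esub> (\<Prod>p\<in>S. p)) = \<phi> \<one>\<^bsub>Q\<^esub>" .
    moreover have "inj_on \<phi> (carrier Q)" using phi unfolding iso_def bij_betw_def by blast
    ultimately show ?thesis
      using inj_onD[of \<phi> "carrier Q"] monoid.nat_pow_closed[OF group.is_monoid[OF Q] q] monoid.one_closed[OF group.is_monoid[OF Q]]
      by blast
  qed
  thus ?thesis using finS prS by blast
qed


lemma (in group) comm_one_imp:
  assumes "a \<in> carrier G" "b \<in> carrier G" "a \<otimes> b \<otimes> inv a \<otimes> inv b = \<one>"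
  shows "a \<otimes> b = b \<otimes> a"
proof -
  have "a \<otimes> b = (a \<otimes> b \<otimes> inv a \<otimes> inv b) \<otimes> (b \<otimes> a)" using assms(1,2) by (simp add: m_assoc)
  thus ?thesis using assms by simp
qed

lemma record_self: "G\<lparr>carrier := carrier G\<rparr> = G" by simp

lemma (in group) main_aux:
  assumes "finite (carrier G)"
    and "has_F_class G 1" and "F_rank G = l"
    and "H \<lhd> G" and "solvable (G\<lparr>carrier := H\<rparr>)"
    and "\<And>N. N \<lhd> G \<Longrightarrow> solvable (G\<lparr>carrier := N\<rparr>) \<Longrightarrow> N \<subseteq> H"
  shows "(dprod_elem_abelian (G\<lparr>carrier := Fitting G\<rparr>) \<and> card (Fitting G) = l)
         \<and> (solvable (G\<lparr>carrier := H\<rparr>) \<and> has_F_class (G\<lparr>carrier := H\<rparr>) 1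
         \<and> F_rank (G\<lparr>carrier := H\<rparr>) = l \<and> Fitting G = Fitting (G\<lparr>carrier := H\<rparr>))
         \<and> {h \<in> H. \<forall>f \<in> Fitting (G\<lparr>carrier := H\<rparr>). h \<otimes>\<^bsub>G\<^esub> f = f \<otimes>\<^bsub>G\<^esub> h}
         = Fitting (G\<lparr>carrier := H\<rparr>)"
proof -
  define F where "F = Fitting G"
  obtain NG where NG: "nsub G (carrier G) NG" "\<exists>n. LC G NG n = {\<one>}"
    and NGmax: "\<And>M. nsub G (carrier G) M \<Longrightarrow> (\<exists>n. LC G M n = {\<one>}) \<Longrightarrow> M \<subseteq> NG"
    and NGF: "Fitting (G\<lparr>carrier := carrier G\<rparr>) = NG"
    using fit_max[OF subgroup_self assms(1)] by blast
  have FNG: "F = NG" using NGF unfolding F_def record_self .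
  have Fn: "F \<lhd> G" using NG(1) nsub_normal_iff FNG by simp
  have maxF: "M \<subseteq> F" if "M \<lhd> G" "\<exists>n. LC G M n = {\<one>}" for M
    using NGmax[of M] that nsub_normal_iff FNG by simp
  have sF: "subgroup F G" using normal_imp_subgroup[OF Fn] .
  have Fc: "F \<subseteq> carrier G" using subgroup.subset[OF sF] .
  have finF: "finite F" using Fc assms(1) finite_subset by blast
  interpret K: group "G\<lparr>carrier := F\<rparr>" using subgroup.subgroup_is_group[OF sF is_group] .
  have c1: "F_central G 1 = {\<one>}" and c0: "F \<noteq> {\<one>}"
    using assms(2) unfolding has_F_class_def F_def by auto
  define Fam where "Fam = {N. N \<subseteq> F \<and> N \<lhd> (G\<lparr>carrier := F\<rparr>) \<and>
      (\<forall>f \<in> F. \<forall>x \<in> F. f \<otimes> x \<otimes> inv f \<otimes> inv x \<in> N) \<and>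
      dprod_elem_abelian ((G\<lparr>carrier := F\<rparr>) Mod N)}"
  have Int: "\<Inter>Fam = {\<one>}" using c1 unfolding Fam_def F_def by (simp add: F_step_def)
  have Famne: "Fam \<noteq> {}"
  proof
    assume "Fam = {}"
    hence "UNIV = {\<one>}" using Int by simp
    hence "F = {\<one>}" using subgroup.one_closed[OF sF] by blast
    thus False using c0 by blast
  qed
  have comm: "f \<otimes> x = x \<otimes> f" if f: "f \<in> F" and x: "x \<in> F" for f x
  proof -
    have "f \<otimes> x \<otimes> inv f \<otimes> inv x \<in> \<Inter>Fam" unfolding Fam_def using f x by blast
    hence "f \<otimes> x \<otimes> inv f \<otimes> inv x = \<one>" using Int by blast
    thus ?thesis using comm_one_imp f x Fc by blast
  qed
  have card_F: "card F = l"
  proof -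
    have "F_rank G = order ((G\<lparr>carrier := F\<rparr>) Mod {\<one>})"
      unfolding F_rank_def using c1 by (simp add: F_def)
    also have "\<dots> = card (rcosets\<^bsub>G\<lparr>carrier := F\<rparr>\<^esub> {\<one>})" unfolding order_def FactGroup_def by simp
    also have "\<dots> = card F"
      using K.lagrange[OF K.triv_subgroup] unfolding order_def by simp
    finally show ?thesis using assms(3) by simp
  qed
  have "\<forall>N\<in>Fam. \<exists>S::nat set. finite S \<and> (\<forall>p\<in>S. Factorial_Ring.prime p) \<and>
           (\<forall>q\<in>carrier ((G\<lparr>carrier := F\<rparr>) Mod N). q [^]\<^bsub>(G\<lparr>carrier := F\<rparr>) Mod N\<^esub> (\<Prod>p\<in>S. p) = \<one>\<^bsub>(G\<lparr>carrier := F\<rparr>) Mod N\<^esub>)"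
  proof
    fix N assume N: "N \<in> Fam"
    hence "N \<lhd> (G\<lparr>carrier := F\<rparr>)" "dprod_elem_abelian ((G\<lparr>carrier := F\<rparr>) Mod N)" unfolding Fam_def by blast+
    thus "\<exists>S::nat set. finite S \<and> (\<forall>p\<in>S. Factorial_Ring.prime p) \<and>
           (\<forall>q\<in>carrier ((G\<lparr>carrier := F\<rparr>) Mod N). q [^]\<^bsub>(G\<lparr>carrier := F\<rparr>) Mod N\<^esub> (\<Prod>p\<in>S. p) = \<one>\<^bsub>(G\<lparr>carrier := F\<rparr>) Mod N\<^esub>)"
      using dprod_exp normal.factorgroup_is_group by blast
  qed
  then obtain SN :: "'a set \<Rightarrow> nat set" where SN: "\<forall>N\<in>Fam. finite (SN N) \<and> (\<forall>p\<in>SN N. Factorial_Ring.prime p) \<and>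
           (\<forall>q\<in>carrier ((G\<lparr>carrier := F\<rparr>) Mod N). q [^]\<^bsub>(G\<lparr>carrier := F\<rparr>) Mod N\<^esub> (\<Prod>p\<in>SN N. p) = \<one>\<^bsub>(G\<lparr>carrier := F\<rparr>) Mod N\<^esub>)"
    by (rule bchoice[elim_format]) blast
  have finFam: "finite Fam"
  proof -
    have "Fam \<subseteq> Pow F" unfolding Fam_def by blast
    thus ?thesis using finF finite_subset by blast
  qed
  define SS where "SS = (\<Union>N\<in>Fam. SN N)"
  have finSS: "finite SS" unfolding SS_def using finFam SN by blast
  have prSS: "\<forall>p\<in>SS. Factorial_Ring.prime p" unfolding SS_def using SN by blast
  define m where "m = (\<Prod>p\<in>SS. p)"
  have expo: "x [^] m = \<one>" if x: "x \<in> F" for x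
  proof -
    have "x [^] m \<in> N" if N: "N \<in> Fam" for N
    proof -
      have Nn: "N \<lhd> (G\<lparr>carrier := F\<rparr>)" using N unfolding Fam_def by blast
      interpret NN: normal N "G\<lparr>carrier := F\<rparr>" by (rule Nn)
      interpret Q: group "(G\<lparr>carrier := F\<rparr>) Mod N" by (rule NN.factorgroup_is_group)
      have xK: "x \<in> carrier (G\<lparr>carrier := F\<rparr>)" using x by simp
      have qc: "N #>\<^bsub>G\<lparr>carrier := F\<rparr>\<^esub> x \<in> carrier ((G\<lparr>carrier := F\<rparr>) Mod N)"
        unfolding FactGroup_def RCOSETS_def using xK by auto
      have q1: "(N #>\<^bsub>G\<lparr>carrier := F\<rparr>\<^esub> x) [^]\<^bsub>(G\<lparr>carrier := F\<rparr>) Mod N\<^esub> (\<Prod>p\<in>SN N. p) = \<one>\<^bsub>(G\<lparr>carrier := F\<rparr>) Mod N\<^esub>"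
        using SN N qc by blast
      have dv: "(\<Prod>p\<in>SN N. p) dvd m" unfolding m_def SS_def
        by (rule prod_dvd_prod_subset) (use finSS N in \<open>auto simp: SS_def\<close>)
      have "(N #>\<^bsub>G\<lparr>carrier := F\<rparr>\<^esub> x) [^]\<^bsub>(G\<lparr>carrier := F\<rparr>) Mod N\<^esub> m = \<one>\<^bsub>(G\<lparr>carrier := F\<rparr>) Mod N\<^esub>"
        by (rule Q.mpow_dvd_one[OF qc q1 dv])
      hence "N #>\<^bsub>G\<lparr>carrier := F\<rparr>\<^esub> (x [^]\<^bsub>G\<lparr>carrier := F\<rparr>\<^esub> m) = N"
        using NN.FactGroup_pow[OF xK, of m] by simp
      hence "x [^]\<^bsub>G\<lparr>carrier := F\<rparr>\<^esub> m \<in> N"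
        using K.coset_join1 K.nat_pow_closed[OF xK] NN.subgroup_axioms by blast
      thus ?thesis using nat_pow_consistent by simp
    qed
    hence "x [^] m \<in> \<Inter>Fam" by blast
    thus ?thesis using Int by blast
  qed
  have KC: "comm_group (G\<lparr>carrier := F\<rparr>)" using comm by (intro K.group_comm_groupI) simp
  have dprod: "dprod_elem_abelian (G\<lparr>carrier := F\<rparr>)"
  proof (rule comm_group.decomp[OF KC finSS prSS])
    show "\<forall>x\<in>carrier (G\<lparr>carrier := F\<rparr>). x [^]\<^bsub>G\<lparr>carrier := F\<rparr>\<^esub> (\<Prod>p\<in>SS. p) = \<one>\<^bsub>G\<lparr>carrier := F\<rparr>\<^esub>"
      using expo nat_pow_consistent unfolding m_def by simp
  qed
  have solF: "solvable (G\<lparr>carrier := F\<rparr>)"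
  proof -
    have "derived (G\<lparr>carrier := F\<rparr>) (carrier (G\<lparr>carrier := F\<rparr>)) = {\<one>\<^bsub>G\<lparr>carrier := F\<rparr>\<^esub>}"
      by (rule comm_group.derived_eq_singleton[OF KC]) simp
    hence "(derived (G\<lparr>carrier := F\<rparr>) ^^ 1) (carrier (G\<lparr>carrier := F\<rparr>)) = {\<one>\<^bsub>G\<lparr>carrier := F\<rparr>\<^esub>}" by simp
    thus ?thesis using K.solvable_iff_trivial_derived_seq by blast
  qed
  have FH: "F \<subseteq> H" using assms(6)[OF Fn solF] .
  have sH: "subgroup H G" using normal_imp_subgroup[OF assms(4)] .
  have finH: "finite H" using subgroup.subset[OF sH] assms(1) finite_subset by blast
  obtain NH where NH: "nsub G H NH" "\<exists>n. LC G NH n = {\<one>}"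
    and NHmax: "\<And>M. nsub G H M \<Longrightarrow> (\<exists>n. LC G M n = {\<one>}) \<Longrightarrow> M \<subseteq> NH"
    and NHF: "Fitting (G\<lparr>carrier := H\<rparr>) = NH"
    using fit_max[OF sH finH] by blast
  have FnH: "nsub G H F" unfolding nsub_def using sF FH Fn subgroup.subset[OF sH]
    by (auto simp: normal_inv_iff)
  have LCF: "LC G F 1 = {\<one>}"
  proof -
    have "cset G F F \<subseteq> {\<one>}"
    proof
      fix s assume "s \<in> cset G F F"
      then obtain a b where ab: "a \<in> F" "b \<in> F" "s = a \<otimes> b \<otimes> inv a \<otimes> inv b" unfolding cset_def by blast
      have c: "a \<in> carrier G" "b \<in> carrier G" using ab Fc by blast+
      have "a \<otimes> b = b \<otimes> a" using comm ab by blast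
      hence "s = b \<otimes> a \<otimes> inv a \<otimes> inv b" using ab by simp
      thus "s \<in> {\<one>}" using c by (simp add: m_assoc)
    qed
    thus ?thesis using commg_trivial by simp
  qed
  have F_NH: "F \<subseteq> NH" using NHmax[OF FnH] LCF by blast
  have NHn: "NH \<lhd> G"
  proof -
    have "g \<otimes> n \<otimes> inv g \<in> NH" if g: "g \<in> carrier G" and n: "n \<in> NH" for g n
    proof -
      have "nsub G H ((\<lambda>x. g \<otimes> x \<otimes> inv g) ` NH)" using nsub_conj_img[OF assms(4) g NH(1)] .
      moreover obtain k where k: "LC G NH k = {\<one>}" using NH(2) by blast
      have NHc: "NH \<subseteq> carrier G" using NH(1) nsub_sub subgroup.subset[OF sH] by blast
      have "LC G ((\<lambda>x. g \<otimes> x \<otimes> inv g) ` NH) k = {\<one>}" using LC_conj[OF g NHc, of k] k g by simp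
      ultimately have "(\<lambda>x. g \<otimes> x \<otimes> inv g) ` NH \<subseteq> NH" using NHmax by blast
      thus ?thesis using n by blast
    qed
    thus ?thesis using normal_inv_iff nsub_subgroup[OF NH(1)] by blast
  qed
  have NH_F: "NH \<subseteq> F" using maxF[OF NHn NH(2)] .
  have FitH: "Fitting (G\<lparr>carrier := H\<rparr>) = F" using NHF F_NH NH_F by blast
  have invH: "\<And>z. z \<in> F \<Longrightarrow> inv\<^bsub>G\<lparr>carrier := H\<rparr>\<^esub> z = inv z" using m_inv_consistent[OF sH] FH by blast
  have step_eq: "F_step (G\<lparr>carrier := H\<rparr>) F = F_step G F"
    unfolding F_step_def FitH F_def[symmetric] by (simp add: invH)
  have cen0: "F_central (G\<lparr>carrier := H\<rparr>) 0 = F" using FitH by simp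
  have cen1: "F_central (G\<lparr>carrier := H\<rparr>) 1 = F_central G 1" using step_eq FitH by (simp add: F_def)
  have classH: "has_F_class (G\<lparr>carrier := H\<rparr>) 1"
    unfolding has_F_class_def using cen0 cen1 c1 c0 by simp
  have rankH: "F_rank (G\<lparr>carrier := H\<rparr>) = l"
    using assms(3) unfolding F_rank_def using cen0 cen1 by (simp add: F_def)
  have cent: "{h \<in> H. \<forall>f \<in> F. h \<otimes> f = f \<otimes> h} = F"
  proof
    show "{h \<in> H. \<forall>f \<in> F. h \<otimes> f = f \<otimes> h} \<subseteq> F"
      by (rule centralizer_sub[OF assms(4) assms(5) Fn FH]) (use maxF in blast)
    show "F \<subseteq> {h \<in> H. \<forall>f \<in> F. h \<otimes> f = f \<otimes> h}" using FH comm by blast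
  qed
  show ?thesis using dprod card_F assms(5) classH rankH FitH cent unfolding F_def by simp
qed


theorem lemma3p1:
  fixes G :: "('a, 'b) monoid_scheme" and H :: "'a set" and l :: nat
  assumes "group G" and "finite (carrier G)"
    and "has_F_class G 1" and "F_rank G = l"
    and "H \<lhd> G" and "solvable (G\<lparr>carrier := H\<rparr>)"
    and "\<And>N. N \<lhd> G \<Longrightarrow> solvable (G\<lparr>carrier := N\<rparr>) \<Longrightarrow> N \<subseteq> H"
  shows "(dprod_elem_abelian (G\<lparr>carrier := Fitting G\<rparr>) \<and> card (Fitting G) = l)
         \<and> (solvable (G\<lparr>carrier := H\<rparr>) \<and> has_F_class (G\<lparr>carrier := H\<rparr>) 1
         \<and> F_rank (G\<lparr>carrier := H\<rparr>) = l \<and> Fitting G = Fitting (G\<lparr>carrier := H\<rparr>))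
         \<and> {h \<in> H. \<forall>f \<in> Fitting (G\<lparr>carrier := H\<rparr>). h \<otimes>\<^bsub>G\<^esub> f = f \<otimes>\<^bsub>G\<^esub> h}
         = Fitting (G\<lparr>carrier := H\<rparr>)"
  using group.main_aux[OF assms] .


end
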